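(* Let $\mathbf{B}$ be a 2-element algebra with universe $\{0,1\}$ such that at least one of the following holds: (1) $\mathsf{MPT}_0^{\infty} \preceq \mathbf{B}$, (2) $\mathsf{MPT}_1^{\infty} \preceq \mathbf{B}$, or (3) $\mathsf{AP} \preceq \mathbf{B}$. Let $\mathbf{A} = \mathbf{B}^n$. Then the quantum circuit $\mathrm{Simon}_\phi(n)$ solves $\mathrm{HKP}(\mathbf{A})$ with probability $1 - 1/\tau$ using $\Theta(n + \lg \tau)$ iterations of the circuit.
   Context: An algebra is a set with finitely many finitary operations; similar algebras have corresponding operations of equal arities. A congruence of an algebra is an equivalence relation on its universe compatible with all operations; the kernel of a homomorphism $\phi$ is $\ker(\phi)=\{(a,b): \phi(a)=\phi(b)\}$. The clone $\mathrm{Clo}(\mathbf{B})$ of term operations of $\mathbf{B}$ is the smallest set of operations on $B$ containing the operations of $\mathbf{B}$ and all projections and closed under composition. For a set $F$ of Boolean operations, the clone generated by $F$ is the smallest clone on $\{0,1\}$ containing $F$. For a clone $\mathcal{C}$ on $\{0,1\}$ write $\mathcal{C}\preceq \mathbf{B}$ if $\mathcal{C}\subseteq \mathrm{Clo}(\mathbf{B})$. Here $\mathsf{MPT}_0^\infty$ is the clone generated by $x \vee (y\wedge z)$, $\mathsf{MPT}_1^\infty$ is the clone generated by $x\wedge(y\vee z)$, and $\mathsf{AP}$ is the clone generated by $x+y+z$ (addition modulo 2). $\mathbf{B}^n$ is the direct power with operations acting coordinatewise; its elements are identified with bit strings in $\{0,1\}^n$. The Hidden Kernel Problem $\mathrm{HKP}(\mathbf{A})$: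 given a similar algebra $\mathbf{C}$ and a homomorphism $\phi:\mathbf{A}\to\mathbf{C}$ accessible only as an oracle (black box), determine the congruence $\ker(\phi)$ (e.g. by a generating set). The circuit $\mathrm{Simon}_\phi(n)$: regard $\phi$ as a function $\{0,1\}^n\to\{0,1\}^m$ (elements of the codomain encoded as bit strings, $m\le n$ possible). Let $\widehat{\phi}$ be the unitary on $n+m$ qubits with $\widehat{\phi}(|x\rangle\otimes|y\rangle)=|x\rangle\otimes|y+\phi(x)\rangle$ ($+$ componentwise mod 2). The circuit applies $(H^{\otimes n}\otimes I_m)\,\widehat{\phi}\,(H^{\otimes n}\otimes I_m)$ to $|0^n\rangle\otimes|0^m\rangle$, where $H$ is the Hadamard gate, and then measures the first $n$ qubits; an iteration is one run of this circuit (with classical post-processing of the measurement results). *)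

theory Defs
  imports Complex_Main
begin

type_synonym 'a oper = "nat \<times> ('a list \<Rightarrow> 'a)"

inductive_set term_ops :: "'a oper list \<Rightarrow> nat \<Rightarrow> ('a list \<Rightarrow> 'a) set"
  for ops :: "'a oper list" and k :: nat where
  proj: "i < k \<Longrightarrow> (\<lambda>xs. xs ! i) \<in> term_ops ops k"
| comp: "(r, f) \<in> set ops \<Longrightarrow> length gs = r \<Longrightarrow> (\<forall>g\<in>set gs. g \<in> term_ops ops k)
          \<Longrightarrow> (\<lambda>xs. f (map (\<lambda>g. g xs) gs)) \<in> term_ops ops k"

text \<open>The clone generated by F is contained in Clo(B) (operations compared as functions on {0,1}^k).\<close>
definition clone_below :: "bool oper list \<Rightarrow> bool oper list \<Rightarrow> bool" where
  "clone_below F ops \<longleftrightarrow>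
     (\<forall>k. \<forall>t\<in>term_ops F k. \<exists>s\<in>term_ops ops k. \<forall>xs. length xs = k \<longrightarrow> t xs = s xs)"

definition MPT0_gen :: "bool oper list" where
  "MPT0_gen = [(3, \<lambda>xs. xs!0 \<or> (xs!1 \<and> xs!2))]"

definition MPT1_gen :: "bool oper list" where
  "MPT1_gen = [(3, \<lambda>xs. xs!0 \<and> (xs!1 \<or> xs!2))]"

definition AP_gen :: "bool oper list" where
  "AP_gen = [(3, \<lambda>xs. (xs!0 \<noteq> xs!1) \<noteq> xs!2)]"

text \<open>Bit strings of length n; universe of B^n (0 = False, 1 = True).\<close>
definition bits :: "nat \<Rightarrow> bool list set" where
  "bits n = {xs. length xs = n}"

definition power_op :: "nat \<Rightarrow> (bool list \<Rightarrow> bool) \<Rightarrow> bool list list \<Rightarrow> bool list" where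
  "power_op n f as = map (\<lambda>i. f (map (\<lambda>a. a ! i) as)) [0..<n]"

definition is_algebra :: "'c set \<Rightarrow> 'c oper list \<Rightarrow> bool" where
  "is_algebra carr ops \<longleftrightarrow>
     (\<forall>(r, f)\<in>set ops. \<forall>as. length as = r \<and> set as \<subseteq> carr \<longrightarrow> f as \<in> carr)"

definition similar :: "'a oper list \<Rightarrow> 'c oper list \<Rightarrow> bool" where
  "similar opsA opsC \<longleftrightarrow> map fst opsA = map fst opsC"

definition is_hom_power :: "nat \<Rightarrow> bool oper list \<Rightarrow> 'c set \<Rightarrow> 'c oper list \<Rightarrow> (bool list \<Rightarrow> 'c) \<Rightarrow> bool" where
  "is_hom_power n opsB carrC opsC phi \<longleftrightarrow>
     (\<forall>a\<in>bits n. phi a \<in> carrC) \<and>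
     (\<forall>j<length opsB. \<forall>as. length as = fst (opsB ! j) \<and> set as \<subseteq> bits n \<longrightarrow>
         phi (power_op n (snd (opsB ! j)) as) = snd (opsC ! j) (map phi as))"

definition kernel :: "nat \<Rightarrow> (bool list \<Rightarrow> 'c) \<Rightarrow> (bool list \<times> bool list) set" where
  "kernel n phi = {(a, b). a \<in> bits n \<and> b \<in> bits n \<and> phi a = phi b}"

section \<open>The circuit Simon_phi(n), states as amplitude functions on |x> (n qubits) \<otimes> |y> (m qubits)\<close>

definition dotp :: "bool list \<Rightarrow> bool list \<Rightarrow> nat" where
  "dotp x y = length (filter id (map2 (\<and>) x y))"

definition xorl :: "bool list \<Rightarrow> bool list \<Rightarrow> bool list" where
  "xorl y z = map2 (\<noteq>) y z"

definition hadamard_first :: "nat \<Rightarrow> (bool list \<Rightarrow> bool list \<Rightarrow> complex) \<Rightarrow> bool list \<Rightarrow> bool list \<Rightarrow> complex" where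
  "hadamard_first n psi = (\<lambda>x y. (1 / complex_of_real (sqrt (2 ^ n))) *
      (\<Sum>x'\<in>bits n. (-1) ^ dotp x x' * psi x' y))"

text \<open>The unitary phi-hat: |x>|y> \<mapsto> |x>|y + phi(x)>\<close>
definition oracle_gate :: "(bool list \<Rightarrow> bool list) \<Rightarrow> (bool list \<Rightarrow> bool list \<Rightarrow> complex) \<Rightarrow> bool list \<Rightarrow> bool list \<Rightarrow> complex" where
  "oracle_gate f psi = (\<lambda>x y. psi x (xorl y (f x)))"

definition init_state :: "nat \<Rightarrow> nat \<Rightarrow> bool list \<Rightarrow> bool list \<Rightarrow> complex" where
  "init_state n m = (\<lambda>x y. if x = replicate n False \<and> y = replicate m False then 1 else 0)"

definition simon_state :: "nat \<Rightarrow> nat \<Rightarrow> (bool list \<Rightarrow> bool list) \<Rightarrow> bool list \<Rightarrow> bool list \<Rightarrow> complex" where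
  "simon_state n m f = hadamard_first n (oracle_gate f (hadamard_first n (init_state n m)))"

definition simon_prob :: "nat \<Rightarrow> nat \<Rightarrow> (bool list \<Rightarrow> bool list) \<Rightarrow> bool list \<Rightarrow> real" where
  "simon_prob n m f x = (\<Sum>y\<in>bits m. (cmod (simon_state n m f x y))\<^sup>2)"

text \<open>Probability that k independent iterations followed by classical post-processing
  post (applied to the list of measurement results) output the relation target.\<close>
definition success_prob :: "nat \<Rightarrow> nat \<Rightarrow> (bool list \<Rightarrow> bool list) \<Rightarrow> (bool list list \<Rightarrow> 'r)
     \<Rightarrow> nat \<Rightarrow> 'r \<Rightarrow> real" where
  "success_prob n m f post k target =
     (\<Sum>ys\<in>{ys. length ys = k \<and> set ys \<subseteq> bits n}.
        (\<Prod>i<k. simon_prob n m f (ys ! i)) * (if post ys = target then 1 else 0))"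

end

theory Submission
  imports Defs
begin

lemma bits_alt: "bits n = {xs. set xs \<subseteq> UNIV \<and> length xs = n}"
  by (auto simp: bits_def)

lemma finite_bits[simp]: "finite (bits n)"
  unfolding bits_alt by (rule finite_lists_length_eq) simp

lemma card_bits: "card (bits n) = 2 ^ n"
  using card_lists_length_eq[of "UNIV::bool set" n] by (simp add: bits_def)

lemma length_xorl[simp]: "length (xorl a b) = min (length a) (length b)"
  by (simp add: xorl_def)

lemma xorl_nth: "length a = n \<Longrightarrow> length b = n \<Longrightarrow> xorl a b = map (\<lambda>i. a!i \<noteq> b!i) [0..<n]"
  by (rule nth_equalityI) (auto simp: xorl_def)

lemma xorl_cancel: "length a = length b \<Longrightarrow> xorl a (xorl a b) = b"
  by (rule nth_equalityI) (auto simp: xorl_def)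

lemma xorl_zero_iff: "length y = m \<Longrightarrow> length z = m \<Longrightarrow> (xorl y z = replicate m False) = (y = z)"
  by (auto simp: xorl_def list_eq_iff_nth_eq)

lemma xorl_zero_right: "xorl c (replicate (length c) False) = c"
  by (rule nth_equalityI) (auto simp: xorl_def)

lemma xorl_bits[simp]: "a \<in> bits n \<Longrightarrow> b \<in> bits n \<Longrightarrow> xorl a b \<in> bits n"
  by (simp add: bits_def)

lemma dotp_Nil[simp]: "dotp [] y = 0" "dotp x [] = 0"
  by (auto simp: dotp_def)

lemma dotp_Cons[simp]: "dotp (a#x) (b#y) = (if a \<and> b then 1 else 0) + dotp x y"
  by (simp add: dotp_def)

lemma dotp_zero[simp]: "dotp x (replicate n False) = 0"
proof (induction x arbitrary: n)
  case Nil then show ?case by simp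
next
  case (Cons a x) then show ?case by (cases n) auto
qed

lemma dotp_xorl:
  "length x = length u \<Longrightarrow> length u = length v \<Longrightarrow>
   ((-1::real) ^ dotp x (xorl u v)) = (-1) ^ dotp x u * (-1) ^ dotp x v"
proof (induction x arbitrary: u v)
  case Nil then show ?case by simp
next
  case (Cons a x)
  then obtain b u' c v' where "u = b#u'" "v = c#v'"
    by (metis length_Suc_conv)
  with Cons show ?case by (auto simp: xorl_def power_add)
qed

lemma bits_Suc: "bits (Suc n) = Cons True ` bits n \<union> Cons False ` bits n"
proof -
  have "xs \<in> Cons True ` bits n \<union> Cons False ` bits n" if "xs \<in> bits (Suc n)" for xs
    using that by (cases xs) (auto simp: bits_def image_iff)
  then show ?thesis by (auto simp: bits_def)
qed

lemma sum_bits_Suc: "(\<Sum>x\<in>bits (Suc n). g x) = (\<Sum>x\<in>bits n. g (True#x) + g (False#x))"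
proof -
  have "(\<Sum>x\<in>bits (Suc n). g x) = (\<Sum>x\<in>Cons True ` bits n. g x) + (\<Sum>x\<in>Cons False ` bits n. g x)"
    unfolding bits_Suc by (rule sum.union_disjoint) auto
  also have "\<dots> = (\<Sum>x\<in>bits n. g (True#x)) + (\<Sum>x\<in>bits n. g (False#x))"
    by (simp add: sum.reindex)
  finally show ?thesis by (simp add: sum.distrib)
qed

lemma char_sum: "d \<in> bits n \<Longrightarrow>
  (\<Sum>x\<in>bits n. (-1::real) ^ dotp x d) = (if d = replicate n False then 2 ^ n else 0)"
proof (induction n arbitrary: d)
  case 0 then show ?case by (simp add: bits_def)
next
  case (Suc n)
  then obtain b d' where d: "d = b#d'" "d' \<in> bits n"
    by (cases d) (auto simp: bits_def)
  show ?case
    using Suc.IH[OF d(2)] d by (auto simp: sum_bits_Suc sum.distrib sum_negf)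
qed

lemma sum_xor_shift: "a \<in> bits n \<Longrightarrow> (\<Sum>d\<in>bits n. h (xorl a d)) = (\<Sum>d\<in>bits n. h d)"
  by (rule sum.reindex_bij_witness[where i="xorl a" and j="xorl a"])
     (auto simp: bits_def xorl_cancel)

lemma sum_lists_prod:
  fixes g :: "'a \<Rightarrow> real"
  assumes "finite A"
  shows "(\<Sum>ys\<in>{ys. length ys = k \<and> set ys \<subseteq> A}. \<Prod>i<k. g (ys!i)) = (\<Sum>x\<in>A. g x) ^ k"
proof (induction k)
  case 0
  have "{ys. length ys = 0 \<and> set ys \<subseteq> A} = {[]}" by auto
  then show ?case by simp
next
  case (Suc k)
  have eq: "{ys. length ys = Suc k \<and> set ys \<subseteq> A} = (\<lambda>(x,ys). x#ys) ` (A \<times> {ys. length ys = k \<and> set ys \<subseteq> A})"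
    by (auto simp: image_iff length_Suc_conv)
  have inj: "inj_on (\<lambda>(x,ys). x#ys) (A \<times> {ys. length ys = k \<and> set ys \<subseteq> A})"
    by (auto simp: inj_on_def)
  have fin: "finite {ys. length ys = k \<and> set ys \<subseteq> A}"
    using finite_lists_length_eq[OF assms, of k] by (simp add: conj_commute)
  have "(\<Sum>ys\<in>{ys. length ys = Suc k \<and> set ys \<subseteq> A}. \<Prod>i<Suc k. g (ys!i))
      = (\<Sum>(x,ys)\<in>A \<times> {ys. length ys = k \<and> set ys \<subseteq> A}. g x * (\<Prod>i<k. g (ys!i)))"
    unfolding eq sum.reindex[OF inj]
    by (rule sum.cong) (auto simp del: prod.lessThan_Suc simp add: prod.lessThan_Suc_shift)
  also have "\<dots> = (\<Sum>x\<in>A. g x) * (\<Sum>ys\<in>{ys. length ys = k \<and> set ys \<subseteq> A}. \<Prod>i<k. g (ys!i))"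
    by (simp add: sum.cartesian_product[symmetric] sum_product)
  finally show ?case using Suc by simp
qed

lemma length_power_op[simp]: "length (power_op n f as) = n"
  by (simp add: power_op_def)

lemma power_op_bits[simp]: "power_op n f as \<in> bits n"
  by (simp add: bits_def)

lemma term_compat:
  assumes hom: "is_hom_power n opsB carrC opsC phi"
  shows "s \<in> term_ops opsB k \<Longrightarrow> length as = k \<Longrightarrow> length bs = k \<Longrightarrow> set as \<subseteq> bits n \<Longrightarrow>
     set bs \<subseteq> bits n \<Longrightarrow> map phi as = map phi bs \<Longrightarrow> phi (power_op n s as) = phi (power_op n s bs)"
proof (induction s arbitrary: as bs rule: term_ops.induct)
  case (proj i)
  have "power_op n (\<lambda>xs. xs ! i) cs = cs ! i" if "length cs = k" "set cs \<subseteq> bits n" for cs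
  proof -
    have "cs ! i \<in> bits n" using that proj.hyps by auto
    then show ?thesis using that proj.hyps by (intro nth_equalityI) (auto simp: power_op_def bits_def)
  qed
  moreover have "phi (as ! i) = phi (bs ! i)"
    using proj by (metis nth_map)
  ultimately show ?case using proj by simp
next
  case (comp r f gs)
  have decomp: "power_op n (\<lambda>xs. f (map (\<lambda>g. g xs) gs)) cs = power_op n f (map (\<lambda>g. power_op n g cs) gs)" for cs
    by (intro nth_equalityI) (simp_all add: power_op_def comp_def)
  obtain j where j: "j < length opsB" "opsB ! j = (r, f)"
    using comp.hyps(1) by (metis in_set_conv_nth)
  have hh: "\<forall>as. length as = fst (opsB!j) \<and> set as \<subseteq> bits n \<longrightarrow> phi (power_op n (snd (opsB!j)) as) = snd (opsC!j) (map phi as)"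
    using hom j(1) unfolding is_hom_power_def by blast
  have h: "phi (power_op n f cs) = snd (opsC ! j) (map phi cs)" if "length cs = r" "set cs \<subseteq> bits n" for cs
    using hh that j(2) by simp
  have "map phi (map (\<lambda>g. power_op n g as) gs) = map phi (map (\<lambda>g. power_op n g bs) gs)"
  proof -
    have "phi (power_op n g as) = phi (power_op n g bs)" if "g \<in> set gs" for g
    proof -
      have "\<forall>x. length x = k \<longrightarrow> (\<forall>xa. length xa = k \<longrightarrow> set x \<subseteq> bits n \<longrightarrow> set xa \<subseteq> bits n \<longrightarrow>
                map phi x = map phi xa \<longrightarrow> phi (power_op n g x) = phi (power_op n g xa))"
        using bspec[OF comp.IH that] by (rule conjunct2)
      then show ?thesis using comp.prems by blast
    qed
    then show ?thesis by simp
  qed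
  moreover have "set (map (\<lambda>g. power_op n g cs) gs) \<subseteq> bits n" for cs
    by auto
  ultimately show ?case
    unfolding decomp using h comp.hyps(2) by (simp del: map_map)
qed

definition pw :: "nat \<Rightarrow> (bool \<Rightarrow> bool \<Rightarrow> bool \<Rightarrow> bool) \<Rightarrow> bool list \<Rightarrow> bool list \<Rightarrow> bool list \<Rightarrow> bool list" where
  "pw n f0 x y z = map (\<lambda>i. f0 (x!i) (y!i) (z!i)) [0..<n]"

lemma gen_compat:
  assumes cb: "clone_below [(3, \<lambda>xs. f0 (xs!0) (xs!1) (xs!2))] opsB"
    and hom: "is_hom_power n opsB carrC opsC phi"
    and mem: "x \<in> bits n" "y \<in> bits n" "y' \<in> bits n" "z \<in> bits n" and eq: "phi y = phi y'"
  shows "phi (pw n f0 x y z) = phi (pw n f0 x y' z)"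
proof -
  let ?F = "[(3::nat, \<lambda>xs::bool list. f0 (xs!0) (xs!1) (xs!2))]"
  have pr: "\<forall>g\<in>set [\<lambda>xs::bool list. xs!0, \<lambda>xs. xs!1, \<lambda>xs. xs!2]. g \<in> term_ops ?F 3"
    by (auto intro: term_ops.proj)
  have "(\<lambda>xs. (\<lambda>xs. f0 (xs!0) (xs!1) (xs!2)) (map (\<lambda>g. g xs) [\<lambda>xs::bool list. xs!0, \<lambda>xs. xs!1, \<lambda>xs. xs!2])) \<in> term_ops ?F 3"
    by (rule term_ops.comp[OF _ _ pr]) simp_all
  then have m1: "(\<lambda>xs. f0 (xs!0) (xs!1) (xs!2)) \<in> term_ops ?F 3" by simp
  have a1: "\<forall>t\<in>term_ops ?F 3. \<exists>s\<in>term_ops opsB 3. \<forall>xs. length xs = 3 \<longrightarrow> t xs = s xs"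
    using cb unfolding clone_below_def by (rule spec)
  have "\<exists>s\<in>term_ops opsB 3. \<forall>xs. length xs = 3 \<longrightarrow> f0 (xs!0) (xs!1) (xs!2) = s xs"
    using bspec[OF a1 m1] by simp
  then obtain s where s: "s \<in> term_ops opsB 3" and st: "\<And>xs. length xs = 3 \<Longrightarrow> f0 (xs!0) (xs!1) (xs!2) = s xs"
    by blast
  have ps: "power_op n s [a, b, c] = pw n f0 a b c" for a b c
  proof -
    have "s [a!i, b!i, c!i] = f0 (a!i) (b!i) (c!i)" for i
      using st[of "[a!i, b!i, c!i]"] by simp
    then show ?thesis unfolding power_op_def pw_def by simp
  qed
  have "phi (power_op n s [x, y, z]) = phi (power_op n s [x, y', z])"
    by (rule term_compat[OF hom s]) (use mem eq in auto)
  then show ?thesis by (simp add: ps)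
qed

lemma bitsD: "x \<in> bits n \<Longrightarrow> length x = n" by (simp add: bits_def)

lemma map_bits[simp]: "map f [0..<n] \<in> bits n" by (simp add: bits_def)

lemma inv_MPT0:
  assumes cb: "clone_below MPT0_gen opsB" and hom: "is_hom_power n opsB carrC opsC phi"
    and ab: "a \<in> bits n" "b \<in> bits n" "c \<in> bits n" and eq: "phi a = phi b"
  shows "phi c = phi (xorl c (xorl a b))"
proof -
  let ?f = "\<lambda>x y z. x \<or> (y \<and> z)"
  have cb': "clone_below [(3, \<lambda>xs. ?f (xs!0) (xs!1) (xs!2))] opsB"
    using cb by (simp add: MPT0_gen_def)
  note gc = gen_compat[OF cb' hom]
  have A: "phi c = phi (map (\<lambda>i. c!i \<or> (a!i \<noteq> b!i)) [0..<n])" if c: "c \<in> bits n" for c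
  proof -
    let ?u = "map (\<lambda>i. b!i \<and> \<not> a!i) [0..<n]"
    let ?c1 = "map (\<lambda>i. c!i \<or> (b!i \<and> \<not> a!i)) [0..<n]"
    let ?d = "map (\<lambda>i. a!i \<noteq> b!i) [0..<n]"
    have "phi (pw n ?f c a ?u) = phi (pw n ?f c b ?u)" by (rule gc) (use ab c eq in auto)
    moreover have "pw n ?f c a ?u = c" using c by (auto simp: pw_def list_eq_iff_nth_eq bits_def)
    moreover have "pw n ?f c b ?u = ?c1" by (auto simp: pw_def list_eq_iff_nth_eq)
    moreover have "phi (pw n ?f ?c1 a ?d) = phi (pw n ?f ?c1 b ?d)" by (rule gc) (use ab c eq in auto)
    moreover have "pw n ?f ?c1 a ?d = map (\<lambda>i. c!i \<or> (a!i \<noteq> b!i)) [0..<n]"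
      by (auto simp: pw_def list_eq_iff_nth_eq)
    moreover have "pw n ?f ?c1 b ?d = ?c1" by (auto simp: pw_def list_eq_iff_nth_eq)
    ultimately show ?thesis by simp
  qed
  have x: "xorl c (xorl a b) = map (\<lambda>i. c!i \<noteq> (a!i \<noteq> b!i)) [0..<n]"
    using ab by (auto simp: xorl_def list_eq_iff_nth_eq bits_def)
  have "phi (xorl c (xorl a b)) = phi (map (\<lambda>i. (xorl c (xorl a b))!i \<or> (a!i \<noteq> b!i)) [0..<n])"
    using A[of "xorl c (xorl a b)"] ab by simp
  also have "map (\<lambda>i. (xorl c (xorl a b))!i \<or> (a!i \<noteq> b!i)) [0..<n] = map (\<lambda>i. c!i \<or> (a!i \<noteq> b!i)) [0..<n]"
    unfolding x by auto
  finally show ?thesis using A[OF ab(3)] by simp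
qed

lemma inv_MPT1:
  assumes cb: "clone_below MPT1_gen opsB" and hom: "is_hom_power n opsB carrC opsC phi"
    and ab: "a \<in> bits n" "b \<in> bits n" "c \<in> bits n" and eq: "phi a = phi b"
  shows "phi c = phi (xorl c (xorl a b))"
proof -
  let ?f = "\<lambda>x y z. x \<and> (y \<or> z)"
  have cb': "clone_below [(3, \<lambda>xs. ?f (xs!0) (xs!1) (xs!2))] opsB"
    using cb by (simp add: MPT1_gen_def)
  note gc = gen_compat[OF cb' hom]
  have A: "phi c = phi (map (\<lambda>i. c!i \<and> \<not>(a!i \<noteq> b!i)) [0..<n])" if c: "c \<in> bits n" for c
  proof -
    let ?u = "map (\<lambda>i. a!i \<or> \<not> b!i) [0..<n]"
    let ?c1 = "map (\<lambda>i. c!i \<and> (a!i \<or> \<not> b!i)) [0..<n]"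
    let ?d = "map (\<lambda>i. \<not>(a!i \<noteq> b!i)) [0..<n]"
    have "phi (pw n ?f c a ?u) = phi (pw n ?f c b ?u)" by (rule gc) (use ab c eq in auto)
    moreover have "pw n ?f c b ?u = c" using c by (auto simp: pw_def list_eq_iff_nth_eq bits_def)
    moreover have "pw n ?f c a ?u = ?c1" by (auto simp: pw_def list_eq_iff_nth_eq)
    moreover have "phi (pw n ?f ?c1 a ?d) = phi (pw n ?f ?c1 b ?d)" by (rule gc) (use ab c eq in auto)
    moreover have "pw n ?f ?c1 b ?d = map (\<lambda>i. c!i \<and> \<not>(a!i \<noteq> b!i)) [0..<n]"
      by (auto simp: pw_def list_eq_iff_nth_eq)
    moreover have "pw n ?f ?c1 a ?d = ?c1" by (auto simp: pw_def list_eq_iff_nth_eq)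
    ultimately show ?thesis by simp
  qed
  have x: "xorl c (xorl a b) = map (\<lambda>i. c!i \<noteq> (a!i \<noteq> b!i)) [0..<n]"
    using ab by (auto simp: xorl_def list_eq_iff_nth_eq bits_def)
  have "phi (xorl c (xorl a b)) = phi (map (\<lambda>i. (xorl c (xorl a b))!i \<and> \<not>(a!i \<noteq> b!i)) [0..<n])"
    using A[of "xorl c (xorl a b)"] ab by simp
  also have "map (\<lambda>i. (xorl c (xorl a b))!i \<and> \<not>(a!i \<noteq> b!i)) [0..<n] = map (\<lambda>i. c!i \<and> \<not>(a!i \<noteq> b!i)) [0..<n]"
    unfolding x by auto
  finally show ?thesis using A[OF ab(3)] by simp
qed

lemma inv_AP:
  assumes cb: "clone_below AP_gen opsB" and hom: "is_hom_power n opsB carrC opsC phi"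
    and ab: "a \<in> bits n" "b \<in> bits n" "c \<in> bits n" and eq: "phi a = phi b"
  shows "phi c = phi (xorl c (xorl a b))"
proof -
  let ?f = "\<lambda>x y z. (x \<noteq> y) \<noteq> z"
  have cb': "clone_below [(3, \<lambda>xs. ?f (xs!0) (xs!1) (xs!2))] opsB"
    using cb by (simp add: AP_gen_def)
  have "phi (pw n ?f c a b) = phi (pw n ?f c b b)"
    by (rule gen_compat[OF cb' hom]) (use ab eq in auto)
  moreover have "pw n ?f c a b = xorl c (xorl a b)"
    using ab by (auto simp: pw_def xorl_def list_eq_iff_nth_eq bits_def)
  moreover have "pw n ?f c b b = c"
    using ab by (auto simp: pw_def list_eq_iff_nth_eq bits_def)
  ultimately show ?thesis by simp
qed

definition Dset :: "nat \<Rightarrow> (bool list \<Rightarrow> bool list) \<Rightarrow> bool list set" where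
  "Dset n phi = {d \<in> bits n. \<forall>c\<in>bits n. phi c = phi (xorl c d)}"

lemma replicate_bits[simp]: "replicate n False \<in> bits n" by (simp add: bits_def)

lemma H_init: "hadamard_first n (init_state n m) x' y =
   (1 / complex_of_real (sqrt (2 ^ n))) * (if y = replicate m False then 1 else 0)"
proof -
  have "(\<Sum>x''\<in>bits n. (-1) ^ dotp x' x'' * init_state n m x'' y) =
        (\<Sum>x''\<in>bits n. if x'' = replicate n False then (if y = replicate m False then 1 else 0) else (0::complex))"
    by (rule sum.cong) (auto simp: init_state_def)
  also have "\<dots> = (if y = replicate m False then 1 else 0)"
    by (simp add: sum.delta')
  finally show ?thesis by (simp add: hadamard_first_def)
qed

locale simon_setup =
  fixes n m :: nat and phi :: "bool list \<Rightarrow> bool list"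
  assumes rng: "\<And>a. a \<in> bits n \<Longrightarrow> phi a \<in> bits m"
    and inv: "\<And>a b c. a \<in> bits n \<Longrightarrow> b \<in> bits n \<Longrightarrow> c \<in> bits n \<Longrightarrow> phi a = phi b \<Longrightarrow>
                phi c = phi (xorl c (xorl a b))"
begin

abbreviation "D \<equiv> Dset n phi"

lemma D_iff: assumes x: "x' \<in> bits n" "d \<in> bits n" shows "(phi x' = phi (xorl x' d)) = (d \<in> D)"
proof
  assume e: "phi x' = phi (xorl x' d)"
  have "phi c = phi (xorl c d)" if "c \<in> bits n" for c
    using inv[OF x(1) _ that e] x by (simp add: xorl_cancel bits_def)
  then show "d \<in> D" using x by (simp add: Dset_def)
next
  assume "d \<in> D"
  then show "phi x' = phi (xorl x' d)" using x by (simp add: Dset_def)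
qed

lemma D_sub: "D \<subseteq> bits n" by (auto simp: Dset_def)

lemma finite_D[simp]: "finite D" by (rule finite_subset[OF D_sub]) simp

lemma zero_D: "replicate n False \<in> D"
proof -
  have "xorl c (replicate n False) = c" if "c \<in> bits n" for c
    using xorl_zero_right[of c] that by (simp add: bits_def)
  then show ?thesis by (simp add: Dset_def)
qed

lemma state_formula:
  assumes x: "x \<in> bits n" and y: "y \<in> bits m"
  shows "simon_state n m phi x y =
     complex_of_real ((\<Sum>x'\<in>bits n. if phi x' = y then (-1) ^ dotp x x' else 0) / 2 ^ n)"
proof -
  define s where "s = complex_of_real (sqrt (2 ^ n))"
  have ss: "s * s = 2 ^ n" unfolding s_def
    by (simp only: of_real_mult[symmetric] real_sqrt_mult_self) simp
  have O: "oracle_gate phi (hadamard_first n (init_state n m)) x' y = (1/s) * (if phi x' = y then 1 else 0)"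
    if "x' \<in> bits n" for x'
  proof -
    have "(xorl y (phi x') = replicate m False) = (y = phi x')"
      using xorl_zero_iff[of y m "phi x'"] rng[OF that] y by (simp add: bits_def)
    then show ?thesis unfolding oracle_gate_def H_init s_def by (simp add: eq_commute)
  qed
  have "simon_state n m phi x y = (1/s) * (\<Sum>x'\<in>bits n. (-1) ^ dotp x x' * ((1/s) * (if phi x' = y then 1 else 0)))"
  proof -
    have "simon_state n m phi x y = (1/s) * (\<Sum>x'\<in>bits n. (-1) ^ dotp x x' * oracle_gate phi (hadamard_first n (init_state n m)) x' y)"
      unfolding simon_state_def hadamard_first_def[of n "oracle_gate phi (hadamard_first n (init_state n m))"] s_def ..
    also have "\<dots> = (1/s) * (\<Sum>x'\<in>bits n. (-1) ^ dotp x x' * ((1/s) * (if phi x' = y then 1 else 0)))"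
      using O by (simp cong: sum.cong)
    finally show ?thesis .
  qed
  also have "\<dots> = (1/(s*s)) * (\<Sum>x'\<in>bits n. if phi x' = y then (-1) ^ dotp x x' else 0)"
  proof -
    have "(\<Sum>x'\<in>bits n. (-1) ^ dotp x x' * ((1/s) * (if phi x' = y then 1 else 0))) =
          (1/s) * (\<Sum>x'\<in>bits n. if phi x' = y then (-1) ^ dotp x x' else 0)"
      unfolding sum_distrib_left by (rule sum.cong) auto
    then show ?thesis by simp
  qed
  also have "\<dots> = complex_of_real ((\<Sum>x'\<in>bits n. if phi x' = y then (-1) ^ dotp x x' else 0) / 2 ^ n)"
  proof -
    have "complex_of_real (\<Sum>x'\<in>bits n. if phi x' = y then (-1) ^ dotp x x' else 0) =
          (\<Sum>x'\<in>bits n. if phi x' = y then (-1) ^ dotp x x' else 0)"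
      unfolding of_real_sum by (rule sum.cong) auto
    then show ?thesis unfolding ss by (simp add: divide_inverse mult.commute)
  qed
  finally show ?thesis .
qed

end

context simon_setup begin

lemma prob_formula:
  assumes x: "x \<in> bits n"
  shows "simon_prob n m phi x = (\<Sum>d\<in>D. (-1::real) ^ dotp x d) / 2 ^ n"
proof -
  define e where "e x' = ((-1::real) ^ dotp x x')" for x'
  define g where "g y = (\<Sum>x'\<in>bits n. if phi x' = y then e x' else 0)" for y
  have "simon_prob n m phi x = (\<Sum>y\<in>bits m. (g y / 2 ^ n)\<^sup>2)"
    unfolding simon_prob_def
  proof (rule sum.cong[OF refl])
    fix y assume y: "y \<in> bits m"
    have "simon_state n m phi x y = complex_of_real (g y / 2 ^ n)"
      unfolding g_def e_def by (rule state_formula[OF x y])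
    then show "(cmod (simon_state n m phi x y))\<^sup>2 = (g y / 2 ^ n)\<^sup>2"
      by (simp only: norm_of_real power2_abs)
  qed
  also have "\<dots> = (\<Sum>y\<in>bits m. (g y)\<^sup>2) / 4 ^ n"
  proof -
    have "(4::real) ^ n = (2 ^ n)\<^sup>2" by (simp add: power2_eq_square flip: power_mult_distrib)
    then show ?thesis by (simp add: sum_divide_distrib power_divide)
  qed
  also have "(\<Sum>y\<in>bits m. (g y)\<^sup>2) = (\<Sum>y\<in>bits m. \<Sum>x'\<in>bits n. \<Sum>x''\<in>bits n.
        (if phi x' = y then e x' else 0) * (if phi x'' = y then e x'' else 0))"
    unfolding g_def power2_eq_square sum_product ..
  also have "\<dots> = (\<Sum>x'\<in>bits n. \<Sum>x''\<in>bits n. \<Sum>y\<in>bits m.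
        (if phi x' = y then e x' else 0) * (if phi x'' = y then e x'' else 0))"
    by (subst sum.swap) (simp add: sum.swap[of _ "bits m"])
  also have "\<dots> = (\<Sum>x'\<in>bits n. \<Sum>x''\<in>bits n. if phi x' = phi x'' then e x' * e x'' else 0)"
  proof (intro sum.cong refl)
    fix x' x'' assume x': "x' \<in> bits n" and x'': "x'' \<in> bits n"
    have "(\<Sum>y\<in>bits m. (if phi x' = y then e x' else 0) * (if phi x'' = y then e x'' else 0)) =
          (\<Sum>y\<in>bits m. if y = phi x' then (if phi x' = phi x'' then e x' * e x'' else 0) else 0)"
      by (rule sum.cong) auto
    also have "\<dots> = (if phi x' = phi x'' then e x' * e x'' else 0)"
      using rng[OF x'] by (simp add: sum.delta)
    finally show "(\<Sum>y\<in>bits m. (if phi x' = y then e x' else 0) * (if phi x'' = y then e x'' else 0)) =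
          (if phi x' = phi x'' then e x' * e x'' else 0)" .
  qed
  also have "\<dots> = (\<Sum>x'\<in>bits n. \<Sum>d\<in>bits n. if d \<in> D then e d else 0)"
  proof (rule sum.cong[OF refl])
    fix x' assume x': "x' \<in> bits n"
    have "(\<Sum>x''\<in>bits n. if phi x' = phi x'' then e x' * e x'' else 0) =
          (\<Sum>d\<in>bits n. if phi x' = phi (xorl x' d) then e x' * e (xorl x' d) else 0)"
      using sum_xor_shift[OF x', of "\<lambda>x''. if phi x' = phi x'' then e x' * e x'' else 0"] by simp
    also have "\<dots> = (\<Sum>d\<in>bits n. if d \<in> D then e d else 0)"
    proof (rule sum.cong[OF refl])
      fix d assume d: "d \<in> bits n"
      have "e x' * e (xorl x' d) = e d"
      proof -
        have sq: "((-1::real)^k) * (-1)^k = 1" for k by (induct k) auto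
        have "e (xorl x' d) = e x' * e d"
          using dotp_xorl[of x x' d] x x' d unfolding e_def by (simp add: bits_def)
        then show ?thesis unfolding e_def using sq by (simp add: mult.assoc[symmetric])
      qed
      then show "(if phi x' = phi (xorl x' d) then e x' * e (xorl x' d) else 0) = (if d \<in> D then e d else 0)"
        using D_iff[OF x' d] by simp
    qed
    finally show "(\<Sum>x''\<in>bits n. if phi x' = phi x'' then e x' * e x'' else 0) = (\<Sum>d\<in>bits n. if d \<in> D then e d else 0)" .
  qed
  also have "\<dots> = 2 ^ n * (\<Sum>d\<in>D. e d)"
    using D_sub by (simp add: card_bits sum.inter_restrict[symmetric] Int_absorb1 flip: sum.inter_filter)
  moreover have "(4::real)^n = 2^n * 2^n" by (simp flip: power_mult_distrib)
  ultimately show ?thesis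
    by (simp add: e_def)
qed

end

context simon_setup begin

abbreviation "P x \<equiv> simon_prob n m phi x"

lemma P_nonneg: "P x \<ge> 0"
  unfolding simon_prob_def by (rule sum_nonneg) simp

lemma P_char:
  assumes d: "d \<in> bits n"
  shows "(\<Sum>x\<in>bits n. P x * (-1) ^ dotp x d) = (if d \<in> D then 1 else 0)"
proof -
  have "(\<Sum>x\<in>bits n. P x * (-1) ^ dotp x d) =
        (\<Sum>x\<in>bits n. (\<Sum>d'\<in>D. (-1::real) ^ dotp x (xorl d' d)) / 2 ^ n)"
  proof (rule sum.cong[OF refl])
    fix x assume x: "x \<in> bits n"
    have "(\<Sum>d'\<in>D. (-1::real) ^ dotp x d') * (-1) ^ dotp x d = (\<Sum>d'\<in>D. (-1::real) ^ dotp x (xorl d' d))"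
      unfolding sum_distrib_right
    proof (rule sum.cong[OF refl])
      fix d' assume "d' \<in> D"
      then have "d' \<in> bits n" using D_sub by auto
      then show "(-1::real) ^ dotp x d' * (-1) ^ dotp x d = (-1) ^ dotp x (xorl d' d)"
        using dotp_xorl[of x d' d] x d \<open>d' \<in> bits n\<close> unfolding bits_def by (metis (mono_tags) mem_Collect_eq)
    qed
    moreover have "P x * (-1) ^ dotp x d = ((\<Sum>d'\<in>D. (-1::real) ^ dotp x d') * (-1) ^ dotp x d) / 2 ^ n"
      unfolding prob_formula[OF x] by (rule times_divide_eq_left)
    ultimately show "P x * (-1) ^ dotp x d = (\<Sum>d'\<in>D. (-1::real) ^ dotp x (xorl d' d)) / 2 ^ n"
      by (simp only:)
  qed
  also have "\<dots> = (\<Sum>d'\<in>D. \<Sum>x\<in>bits n. (-1::real) ^ dotp x (xorl d' d)) / 2 ^ n"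
    by (simp only: sum_divide_distrib) (rule sum.swap)
  also have "\<dots> = (\<Sum>d'\<in>D. if d' = d then 2 ^ n else 0) / 2 ^ n"
  proof -
    have "(\<Sum>x\<in>bits n. (-1::real) ^ dotp x (xorl d' d)) = (if d' = d then 2 ^ n else 0)" if "d' \<in> D" for d'
    proof -
      have d': "d' \<in> bits n" using that D_sub by auto
      have iff: "(xorl d' d = replicate n False) = (d' = d)"
        using xorl_zero_iff[of d' n d] d d' unfolding bits_def by (metis (mono_tags) mem_Collect_eq)
      have "(\<Sum>x\<in>bits n. (-1::real) ^ dotp x (xorl d' d)) = (if xorl d' d = replicate n False then 2 ^ n else 0)"
        by (rule char_sum) (rule xorl_bits[OF d' d])
      then show ?thesis unfolding iff .
    qed
    then have "(\<Sum>d'\<in>D. \<Sum>x\<in>bits n. (-1::real) ^ dotp x (xorl d' d)) = (\<Sum>d'\<in>D. if d' = d then 2 ^ n else 0)"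
      by (rule sum.cong[OF refl])
    then show ?thesis by (simp only:)
  qed
  also have "\<dots> = (if d \<in> D then 1 else 0)"
    by (simp add: sum.delta')
  finally show ?thesis .
qed

lemma P_sum: "(\<Sum>x\<in>bits n. P x) = 1"
  using P_char[of "replicate n False"] zero_D by simp

lemma P_even:
  assumes d: "d \<in> bits n"
  shows "(\<Sum>x\<in>bits n. P x * (if even (dotp x d) then 1 else 0)) = (if d \<in> D then 1 else 1/2)"
proof -
  have "(\<Sum>x\<in>bits n. P x * (if even (dotp x d) then 1 else 0)) =
        (\<Sum>x\<in>bits n. P x / 2 + P x * (-1) ^ dotp x d / 2)"
    by (rule sum.cong) auto
  also have "\<dots> = (\<Sum>x\<in>bits n. P x) / 2 + (\<Sum>x\<in>bits n. P x * (-1) ^ dotp x d) / 2"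
    by (simp add: sum.distrib sum_divide_distrib)
  finally show ?thesis using P_sum P_char[OF d] by simp
qed

lemma P_zero:
  assumes d: "d \<in> D" and x: "x \<in> bits n" and px: "P x \<noteq> 0"
  shows "even (dotp x d)"
proof (rule ccontr)
  assume odd: "\<not> even (dotp x d)"
  have db: "d \<in> bits n" using d D_sub by auto
  have "(\<Sum>x\<in>bits n. P x * (if even (dotp x d) then 0 else 1)) =
        (\<Sum>x\<in>bits n. P x - P x * (if even (dotp x d) then 1 else 0))"
    by (rule sum.cong) auto
  also have "\<dots> = 0" using P_sum P_even[OF db] d by (simp add: sum_subtractf)
  finally have "\<forall>x\<in>bits n. P x * (if even (dotp x d) then 0 else 1) = 0"
    by (subst sum_nonneg_eq_0_iff[symmetric]) (auto intro: P_nonneg)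
  then show False using x odd px by auto
qed

end

definition postp :: "nat \<Rightarrow> bool list list \<Rightarrow> (bool list \<times> bool list) set" where
  "postp n ys = {(a, b). a \<in> bits n \<and> b \<in> bits n \<and> (\<forall>y\<in>set ys. even (dotp y (xorl a b)))}"

context simon_setup begin

lemma main_bound: "success_prob n m phi (postp n) k (kernel n phi) \<ge> 1 - 2 ^ n / 2 ^ k"
proof -
  define L where "L = {ys. length ys = k \<and> set ys \<subseteq> bits n}"
  define w where "w ys = (\<Prod>i<k. P (ys ! i))" for ys
  define K where "K = kernel n phi"
  define B where "B = bits n - D"
  have finL: "finite L"
    unfolding L_def using finite_lists_length_eq[OF finite_bits, of n k] by (simp add: conj_commute)
  have w_nonneg: "w ys \<ge> 0" for ys unfolding w_def by (rule prod_nonneg) (simp add: P_nonneg)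
  have sumw: "(\<Sum>ys\<in>L. w ys) = 1"
    unfolding L_def w_def using sum_lists_prod[where A="bits n" and k=k and g=P, OF finite_bits] P_sum by simp
  have succ: "success_prob n m phi (postp n) k K = (\<Sum>ys\<in>L. w ys * (if postp n ys = K then 1 else 0))"
    unfolding success_prob_def L_def w_def ..
  have bad: "w ys * (if postp n ys = K then 0 else 1) \<le>
      (\<Sum>d\<in>B. \<Prod>i<k. P (ys ! i) * (if even (dotp (ys ! i) d) then 1 else 0))" if ys: "ys \<in> L" for ys
  proof (cases "w ys = 0 \<or> postp n ys = K")
    case True
    then have "w ys * (if postp n ys = K then 0 else 1) = 0" by auto
    also have "0 \<le> (\<Sum>d\<in>B. \<Prod>i<k. P (ys ! i) * (if even (dotp (ys ! i) d) then 1 else 0))"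
      by (intro sum_nonneg prod_nonneg) (simp add: P_nonneg)
    finally show ?thesis .
  next
    case False
    then have wnz: "w ys \<noteq> 0" and ne: "postp n ys \<noteq> K" by auto
    have Pnz: "P (ys ! i) \<noteq> 0" if "i < k" for i
      using wnz that unfolding w_def by auto
    have ysb: "ys ! i \<in> bits n" if "i < k" for i
      using ys that unfolding L_def by auto
    have "K \<subseteq> postp n ys"
    proof
      fix p assume "p \<in> K"
      then obtain a b where p: "p = (a, b)" and a: "a \<in> bits n" and b: "b \<in> bits n" and e: "phi a = phi b"
        unfolding K_def kernel_def by auto
      have lab: "length a = length b" using a b by (simp add: bits_def)
      have "phi a = phi (xorl a (xorl a b))" using e xorl_cancel[OF lab] by simp
      then have dD: "xorl a b \<in> D" using D_iff[OF a xorl_bits[OF a b]] by simp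
      have "even (dotp y (xorl a b))" if "y \<in> set ys" for y
      proof -
        obtain i where i: "i < length ys" "y = ys ! i" using \<open>y \<in> set ys\<close> by (metis in_set_conv_nth)
        have "i < k" using i ys unfolding L_def by simp
        then show ?thesis using P_zero[OF dD ysb Pnz] i by simp
      qed
      then show "p \<in> postp n ys" using p a b unfolding postp_def by simp
    qed
    with ne obtain a b where ab: "(a, b) \<in> postp n ys" "(a, b) \<notin> K" by auto
    then have a: "a \<in> bits n" and b: "b \<in> bits n" and ev: "\<forall>y\<in>set ys. even (dotp y (xorl a b))"
      unfolding postp_def by auto
    have dB: "xorl a b \<in> B"
    proof -
      have lab: "length a = length b" using a b by (simp add: bits_def)
      have "phi a \<noteq> phi b" using ab(2) a b unfolding K_def kernel_def by auto
      then have "phi a \<noteq> phi (xorl a (xorl a b))" using xorl_cancel[OF lab] by simp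
      then have "xorl a b \<notin> D" using D_iff[OF a xorl_bits[OF a b]] by simp
      then show ?thesis unfolding B_def using a b by simp
    qed
    have "w ys * (if postp n ys = K then 0 else 1) = (\<Prod>i<k. P (ys ! i) * (if even (dotp (ys ! i) (xorl a b)) then 1 else 0))"
      unfolding w_def using ne ev ys unfolding L_def by (auto intro!: prod.cong)
    also have "\<dots> \<le> (\<Sum>d\<in>B. \<Prod>i<k. P (ys ! i) * (if even (dotp (ys ! i) d) then 1 else 0))"
      by (rule member_le_sum[OF dB]) (auto intro!: prod_nonneg simp: P_nonneg B_def)
    finally show ?thesis .
  qed
  have "(\<Sum>ys\<in>L. w ys * (if postp n ys = K then 0 else 1)) \<le>
        (\<Sum>ys\<in>L. \<Sum>d\<in>B. \<Prod>i<k. P (ys ! i) * (if even (dotp (ys ! i) d) then 1 else 0))"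
    by (rule sum_mono) (rule bad)
  also have "\<dots> = (\<Sum>d\<in>B. \<Sum>ys\<in>L. \<Prod>i<k. P (ys ! i) * (if even (dotp (ys ! i) d) then 1 else 0))"
    by (rule sum.swap)
  also have "\<dots> = (\<Sum>d\<in>B. (1/2) ^ k)"
  proof (rule sum.cong[OF refl])
    fix d assume d: "d \<in> B"
    then have db: "d \<in> bits n" and dD: "d \<notin> D" unfolding B_def by auto
    show "(\<Sum>ys\<in>L. \<Prod>i<k. P (ys ! i) * (if even (dotp (ys ! i) d) then 1 else 0)) = (1/2) ^ k"
      unfolding L_def using sum_lists_prod[where A="bits n" and k=k and g="\<lambda>x. P x * (if even (dotp x d) then 1 else 0)", OF finite_bits]
        P_even[OF db] dD by simp
  qed
  also have "\<dots> = real (card B) / 2 ^ k" by (simp add: power_one_over)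
  also have "\<dots> \<le> 2 ^ n / 2 ^ k"
  proof -
    have "card B \<le> card (bits n)" unfolding B_def by (rule card_mono) auto
    then have "real (card B) \<le> 2 ^ n" using card_bits[of n] by (metis of_nat_le_iff of_nat_numeral of_nat_power)
    then show ?thesis by (simp add: divide_right_mono)
  qed
  finally have badsum: "(\<Sum>ys\<in>L. w ys * (if postp n ys = K then 0 else 1)) \<le> 2 ^ n / 2 ^ k" .
  have "(\<Sum>ys\<in>L. w ys * (if postp n ys = K then 1 else 0)) = (\<Sum>ys\<in>L. w ys) - (\<Sum>ys\<in>L. w ys * (if postp n ys = K then 0 else 1))"
    unfolding sum_subtractf[symmetric] by (rule sum.cong) auto
  then show ?thesis using badsum sumw succ unfolding K_def by linarith
qed

end

lemma final_ineq:
  fixes \<tau> :: real and n :: nat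
  assumes tau: "\<tau> \<ge> 1"
  shows "1 - 2 ^ n / 2 ^ (nat \<lceil>1 * (real n + log 2 \<tau>)\<rceil>) \<ge> 1 - 1 / \<tau>"
proof -
  define k where "k = nat \<lceil>1 * (real n + log 2 \<tau>)\<rceil>"
  have lg: "log 2 \<tau> \<ge> 0" using tau by simp
  have x0: "0 \<le> 1 * (real n + log 2 \<tau>)" using lg by simp
  have "real k = real_of_int \<lceil>1 * (real n + log 2 \<tau>)\<rceil>" unfolding k_def using x0 by simp
  then have kge: "real k \<ge> real n + log 2 \<tau>" using le_of_int_ceiling[of "1 * (real n + log 2 \<tau>)"] by simp
  have "(2::real) ^ n * \<tau> = 2 powr (real n + log 2 \<tau>)"
    using tau by (simp add: powr_add powr_realpow)
  also have "\<dots> \<le> 2 powr real k" by (rule powr_mono[OF kge]) simp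
  also have "\<dots> = 2 ^ k" by (simp add: powr_realpow)
  finally have le: "(2::real) ^ n * \<tau> \<le> 2 ^ k" .
  have "(2::real) ^ n / 2 ^ k \<le> 1 / \<tau>"
    using le tau by (simp add: field_simps)
  then show ?thesis unfolding k_def by simp
qed

theorem theorem4p1:
  shows "\<exists>c::real. c > 0 \<and>
    (\<exists>post :: bool oper list \<Rightarrow> nat \<Rightarrow> bool list list \<Rightarrow> (bool list \<times> bool list) set.
      \<forall>(opsB :: bool oper list) (n :: nat) (carrC :: bool list set) (opsC :: bool list oper list)
        (phi :: bool list \<Rightarrow> bool list) (m :: nat) (\<tau> :: real).
        (clone_below MPT0_gen opsB \<or> clone_below MPT1_gen opsB \<or> clone_below AP_gen opsB) \<and>
        similar opsB opsC \<and> is_algebra carrC opsC \<and> carrC \<subseteq> bits m \<and>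
        is_hom_power n opsB carrC opsC phi \<and> \<tau> \<ge> 1
        \<longrightarrow> success_prob n m phi (post opsB n) (nat \<lceil>c * (real n + log 2 \<tau>)\<rceil>) (kernel n phi)
              \<ge> 1 - 1 / \<tau>)"
proof -
  have main: "success_prob n m phi (postp n) (nat \<lceil>1 * (real n + log 2 \<tau>)\<rceil>) (kernel n phi) \<ge> 1 - 1 / \<tau>"
    if cl: "clone_below MPT0_gen opsB \<or> clone_below MPT1_gen opsB \<or> clone_below AP_gen opsB"
      and sub: "carrC \<subseteq> bits m" and hom: "is_hom_power n opsB carrC opsC phi" and tau: "\<tau> \<ge> 1"
    for opsB :: "bool oper list" and n :: nat and carrC :: "bool list set" and opsC :: "bool list oper list"
      and phi :: "bool list \<Rightarrow> bool list" and m :: nat and \<tau> :: real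
  proof -
    interpret simon_setup n m phi
    proof
      fix a assume "a \<in> bits n"
      then show "phi a \<in> bits m" using hom sub unfolding is_hom_power_def by auto
    next
      fix a b c assume abc: "a \<in> bits n" "b \<in> bits n" "c \<in> bits n" "phi a = phi b"
      from cl show "phi c = phi (xorl c (xorl a b))"
      proof (elim disjE)
        assume "clone_below MPT0_gen opsB" then show ?thesis using inv_MPT0[OF _ hom abc] by blast
      next
        assume "clone_below MPT1_gen opsB" then show ?thesis using inv_MPT1[OF _ hom abc] by blast
      next
        assume "clone_below AP_gen opsB" then show ?thesis using inv_AP[OF _ hom abc] by blast
      qed
    qed
    show ?thesis using main_bound[of "nat \<lceil>1 * (real n + log 2 \<tau>)\<rceil>"] final_ineq[OF tau, of n] by linarith
  qed
  show ?thesis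
  proof (intro exI[of _ "1::real"] conjI exI[of _ "\<lambda>_. postp"] allI impI)
    show "(0::real) < 1" by simp
  next
    fix opsB n carrC opsC phi m \<tau>
    assume H: "(clone_below MPT0_gen opsB \<or> clone_below MPT1_gen opsB \<or> clone_below AP_gen opsB) \<and>
        similar opsB opsC \<and> is_algebra carrC opsC \<and> carrC \<subseteq> bits m \<and>
        is_hom_power n opsB carrC opsC phi \<and> (\<tau>::real) \<ge> 1"
    have cl: "clone_below MPT0_gen opsB \<or> clone_below MPT1_gen opsB \<or> clone_below AP_gen opsB"
      using H by (rule conjunct1)
    have sub: "carrC \<subseteq> bits m" using H by simp
    have hom: "is_hom_power n opsB carrC opsC phi" using H by simp
    have tau: "\<tau> \<ge> 1" using H by simp
    show "success_prob n m phi (postp n) (nat \<lceil>1 * (real n + log 2 \<tau>)\<rceil>) (kernel n phi) \<ge> 1 - 1 / \<tau>"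
      by (rule main[OF cl sub hom tau])
  qed
qed

end
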